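(* As operators on symmetric functions, $$[D(\alpha),E_2] =(\alpha-1)\sum_{i\geq1}(i-1)^2p_i\frac{\partial}{\partial p_{i-1}}+ \sum_{i,j\geq1}(i+j-1)p_ip_j\frac{\partial}{\partial p_{i+j-1}}+\alpha\sum_{i,j\geq1}ij\,p_{i+j+1}\frac{\partial}{\partial p_{i}}\frac{\partial}{\partial p_{j}},$$ where the $i=1$ term of the first sum is zero.
   Context: Symmetric functions are written in power sums $p_k$ in variables $x=(x_1,x_2,\dots)$. $D(\alpha) = \frac{\alpha}{2}\sum_{i}x_i^2\frac{\partial^2}{\partial x_i^2}+\sum_{i}\sum_{j\neq i}\frac{x_ix_j}{x_i-x_j}\frac{\partial}{\partial x_i}$ is the Laplace–Beltrami operator, and $E_2=\sum_{k\ge1}kp_{k+1}\frac{\partial}{\partial p_k}=\sum_i x_i^2\frac{\partial}{\partial x_i}$. $[A,B]=AB-BA$. *)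

theory Defs
  imports "HOL-Analysis.Analysis" "HOL-Library.Poly_Mapping"
begin

text \<open>A symmetric function is a polynomial with real coefficients in the power sums
  p_1, p_2, ...  A monomial is a finitely supported exponent vector m, where
  Poly_Mapping.lookup m k is the exponent of p_k.\<close>

type_synonym symfun = "(nat \<Rightarrow>\<^sub>0 nat) \<Rightarrow>\<^sub>0 real"

definition pvar :: "nat \<Rightarrow> symfun" where
  "pvar k = Poly_Mapping.single (Poly_Mapping.single k 1) 1"

definition dp :: "nat \<Rightarrow> symfun \<Rightarrow> symfun" where
  "dp k F = (\<Sum>mon\<in>Poly_Mapping.keys F. Poly_Mapping.single (mon - Poly_Mapping.single k (1::nat))
                 (Poly_Mapping.lookup F mon * real (Poly_Mapping.lookup mon k)))"

definition pidx :: "symfun \<Rightarrow> nat set" where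
  "pidx F = (\<Union>m\<in>Poly_Mapping.keys F. Poly_Mapping.keys m)"

definition pbound :: "symfun \<Rightarrow> nat" where
  "pbound F = Max (insert 0 (pidx F))"

definition is_symfun :: "symfun \<Rightarrow> bool" where
  "is_symfun F \<longleftrightarrow> 0 \<notin> pidx F"

text \<open>The right-hand side operator.  All sums over i, j \<ge> 1 are truncated at
  pbound F (resp. pbound F + 1), beyond which every term vanishes since the
  corresponding derivative of F is zero.\<close>
definition rhs_op :: "real \<Rightarrow> symfun \<Rightarrow> symfun" where
  "rhs_op \<alpha> F =
     Poly_Mapping.single 0 (\<alpha> - 1) *
       (\<Sum>i\<in>{2..pbound F + 1}. Poly_Mapping.single 0 (real ((i - 1)^2)) * pvar i * dp (i - 1) F)
   + (\<Sum>i\<in>{1..pbound F}. \<Sum>j\<in>{1..pbound F}.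
        Poly_Mapping.single 0 (real (i + j - 1)) * pvar i * pvar j * dp (i + j - 1) F)
   + Poly_Mapping.single 0 \<alpha> *
       (\<Sum>i\<in>{1..pbound F}. \<Sum>j\<in>{1..pbound F}.
        Poly_Mapping.single 0 (real (i * j)) * pvar (i + j + 1) * dp i (dp j F))"

definition psum :: "nat \<Rightarrow> nat \<Rightarrow> (nat \<Rightarrow> real) \<Rightarrow> real" where
  "psum n k x = (\<Sum>i<n. x i ^ k)"

definition ev :: "nat \<Rightarrow> symfun \<Rightarrow> (nat \<Rightarrow> real) \<Rightarrow> real" where
  "ev n F x = (\<Sum>m\<in>Poly_Mapping.keys F. Poly_Mapping.lookup F m * (\<Prod>k\<in>Poly_Mapping.keys m. psum n k x ^ Poly_Mapping.lookup m k))"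

definition pd :: "nat \<Rightarrow> ((nat \<Rightarrow> real) \<Rightarrow> real) \<Rightarrow> (nat \<Rightarrow> real) \<Rightarrow> real" where
  "pd i f x = deriv (\<lambda>t. f (x(i := t))) (x i)"

definition LB :: "real \<Rightarrow> nat \<Rightarrow> ((nat \<Rightarrow> real) \<Rightarrow> real) \<Rightarrow> (nat \<Rightarrow> real) \<Rightarrow> real" where
  "LB \<alpha> n f x = \<alpha> / 2 * (\<Sum>i<n. x i ^ 2 * pd i (pd i f) x)
      + (\<Sum>i<n. \<Sum>j\<in>{..<n} - {i}. x i * x j / (x i - x j) * pd i f x)"

definition E2 :: "nat \<Rightarrow> ((nat \<Rightarrow> real) \<Rightarrow> real) \<Rightarrow> (nat \<Rightarrow> real) \<Rightarrow> real" where
  "E2 n f x = (\<Sum>i<n. x i ^ 2 * pd i f x)"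

end

theory Submission
  imports Defs
begin


abbreviation cst :: "real \<Rightarrow> symfun" where "cst c \<equiv> Poly_Mapping.single 0 c"

abbreviation ek :: "nat \<Rightarrow> (nat \<Rightarrow>\<^sub>0 nat)" where "ek k \<equiv> Poly_Mapping.single k 1"

lemma poly_decomp: "(F::symfun) = (\<Sum>m\<in>Poly_Mapping.keys F. Poly_Mapping.single m (Poly_Mapping.lookup F m))"
proof (rule poly_mapping_eqI)
  fix k
  have "Poly_Mapping.lookup (\<Sum>m\<in>Poly_Mapping.keys F. Poly_Mapping.single m (Poly_Mapping.lookup F m)) k
     = (\<Sum>m\<in>Poly_Mapping.keys F. if m = k then Poly_Mapping.lookup F m else 0)"
    by (simp add: lookup_sum lookup_single when_def)
  also have "\<dots> = Poly_Mapping.lookup F k"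
    by (simp add: in_keys_iff)
  finally show "Poly_Mapping.lookup F k = Poly_Mapping.lookup (\<Sum>m\<in>Poly_Mapping.keys F. Poly_Mapping.single m (Poly_Mapping.lookup F m)) k" by simp
qed

lemma mon_eq_iff: "(a::nat\<Rightarrow>\<^sub>0nat) = b \<longleftrightarrow> (\<forall>k. Poly_Mapping.lookup a k = Poly_Mapping.lookup b k)"
  by (simp add: poly_mapping_eq_iff fun_eq_iff)

lemma lookup_dp: "Poly_Mapping.lookup (dp k F) m = real (Poly_Mapping.lookup m k + 1) * Poly_Mapping.lookup F (m + ek k)"
proof -
  have t: "(if mon - ek k = m then Poly_Mapping.lookup F mon * real (Poly_Mapping.lookup mon k) else 0)
     = (if mon = m + ek k then Poly_Mapping.lookup F mon * real (Poly_Mapping.lookup m k + 1) else 0)" for mon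
  proof (cases "mon = m + ek k")
    case True
    then show ?thesis by (simp add: lookup_add)
  next
    case False
    show ?thesis
    proof (cases "Poly_Mapping.lookup mon k = 0")
      case True then show ?thesis using False by simp
    next
      case nz: False
      have "mon - ek k \<noteq> m"
      proof
        assume "mon - ek k = m"
        hence "mon = m + ek k" using nz
          by (auto simp: mon_eq_iff lookup_minus lookup_add lookup_single when_def split: if_splits)
        with False show False by simp
      qed
      then show ?thesis using False by simp
    qed
  qed
  have "Poly_Mapping.lookup (dp k F) m = (\<Sum>mon\<in>Poly_Mapping.keys F.
      (if mon - ek k = m then Poly_Mapping.lookup F mon * real (Poly_Mapping.lookup mon k) else 0))"
    by (simp add: dp_def lookup_sum lookup_single when_def)
  also have "\<dots> = (\<Sum>mon\<in>Poly_Mapping.keys F.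
      (if mon = m + ek k then Poly_Mapping.lookup F mon * real (Poly_Mapping.lookup m k + 1) else 0))"
    using t by simp
  also have "\<dots> = real (Poly_Mapping.lookup m k + 1) * Poly_Mapping.lookup F (m + ek k)"
    by (simp add: in_keys_iff)
  finally show ?thesis .
qed

lemma dp_add: "dp k (F + G) = dp k F + dp k G"
  by (rule poly_mapping_eqI) (simp add: lookup_dp lookup_add algebra_simps)

lemma dp_zero[simp]: "dp k 0 = 0"
  by (rule poly_mapping_eqI) (simp add: lookup_dp)

lemma dp_minus: "dp k (F - G) = dp k F - dp k G"
  by (rule poly_mapping_eqI) (simp add: lookup_dp lookup_minus algebra_simps)

lemma dp_uminus: "dp k (- F) = - dp k F"
  by (rule poly_mapping_eqI) (simp add: lookup_dp)

lemma dp_sum: "dp k (\<Sum>i\<in>S. f i) = (\<Sum>i\<in>S. dp k (f i))"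
  by (induction S rule: infinite_finite_induct) (auto simp: dp_add)

lemma dp_single: "dp k (Poly_Mapping.single a c) = Poly_Mapping.single (a - ek k) (c * real (Poly_Mapping.lookup a k))"
  by (cases "c = 0") (simp_all add: dp_def)

lemma dp_comm: "dp k (dp l F) = dp l (dp k F)"
proof (cases "k = l")
  case False
  show ?thesis
  proof (rule poly_mapping_eqI)
    fix m
    have e: "m + ek k + ek l = m + ek l + ek k" by (metis add.assoc add.commute)
    have a: "Poly_Mapping.lookup (m + ek k) l = Poly_Mapping.lookup m l"
      using False by (simp add: lookup_add lookup_single)
    have b: "Poly_Mapping.lookup (m + ek l) k = Poly_Mapping.lookup m k"
      using False by (simp add: lookup_add lookup_single)
    show "Poly_Mapping.lookup (dp k (dp l F)) m = Poly_Mapping.lookup (dp l (dp k F)) m"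
      unfolding lookup_dp a b e by simp
  qed
qed simp


lemma dp_mult_single: "dp k (Poly_Mapping.single a c * Poly_Mapping.single b d)
   = dp k (Poly_Mapping.single a c) * Poly_Mapping.single b d + Poly_Mapping.single a c * dp k (Poly_Mapping.single b d)"
proof (cases "Poly_Mapping.lookup a k = 0")
  case True
  have e2: "a + (b - Poly_Mapping.single k (Suc 0)) = a + b - Poly_Mapping.single k (Suc 0)" if "Poly_Mapping.lookup b k \<noteq> 0"
    using that by (auto simp: mon_eq_iff lookup_minus lookup_add lookup_single when_def)
  then show ?thesis using True by (cases "Poly_Mapping.lookup b k = 0") (simp_all add: mult_single dp_single lookup_add algebra_simps)
next
  case False
  have e: "a - ek k + b = a + b - ek k" "b + (a - Poly_Mapping.single k (Suc 0)) = a + b - Poly_Mapping.single k (Suc 0)"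
    using False by (auto simp: mon_eq_iff lookup_minus lookup_add lookup_single when_def)
  have e2: "a + (b - Poly_Mapping.single k (Suc 0)) = a + b - Poly_Mapping.single k (Suc 0)" if "Poly_Mapping.lookup b k \<noteq> 0"
    using that by (auto simp: mon_eq_iff lookup_minus lookup_add lookup_single when_def)
  show ?thesis
  proof (cases "Poly_Mapping.lookup b k = 0")
    case True
    then show ?thesis by (simp add: mult_single dp_single lookup_add e algebra_simps)
  next
    case False
    then show ?thesis by (simp add: mult_single dp_single lookup_add e e2 single_add[symmetric] algebra_simps)
  qed
qed

lemma dp_mult: "dp k (F * G) = dp k F * G + F * dp k G"
proof -
  define sF where "sF a = Poly_Mapping.single a (Poly_Mapping.lookup F a)" for a
  define sG where "sG b = Poly_Mapping.single b (Poly_Mapping.lookup G b)" for b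
  have F: "F = (\<Sum>a\<in>Poly_Mapping.keys F. sF a)" unfolding sF_def by (rule poly_decomp)
  have G: "G = (\<Sum>b\<in>Poly_Mapping.keys G. sG b)" unfolding sG_def by (rule poly_decomp)
  have "dp k (F * G) = dp k ((\<Sum>a\<in>Poly_Mapping.keys F. sF a) * (\<Sum>b\<in>Poly_Mapping.keys G. sG b))"
    using F G by simp
  also have "\<dots> = (\<Sum>a\<in>Poly_Mapping.keys F. \<Sum>b\<in>Poly_Mapping.keys G. dp k (sF a * sG b))"
    by (simp add: sum_product dp_sum)
  also have "\<dots> = (\<Sum>a\<in>Poly_Mapping.keys F. \<Sum>b\<in>Poly_Mapping.keys G. dp k (sF a) * sG b + sF a * dp k (sG b))"
    unfolding sF_def sG_def by (simp add: dp_mult_single)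
  also have "\<dots> = (\<Sum>a\<in>Poly_Mapping.keys F. dp k (sF a)) * (\<Sum>b\<in>Poly_Mapping.keys G. sG b)
        + (\<Sum>a\<in>Poly_Mapping.keys F. sF a) * (\<Sum>b\<in>Poly_Mapping.keys G. dp k (sG b))"
    by (simp add: sum_product sum.distrib)
  also have "\<dots> = dp k F * G + F * dp k G"
    using F G dp_sum[of k sF "Poly_Mapping.keys F"] dp_sum[of k sG "Poly_Mapping.keys G"] by metis
  finally show ?thesis .
qed

lemma dp_const[simp]: "dp k (cst c) = 0"
  by (simp add: dp_single)

lemma dp_pvar: "dp k (pvar j) = (if j = k then 1 else 0)"
  by (simp add: pvar_def dp_single lookup_single when_def)

lemma dp_cmult: "dp k (cst c * G) = cst c * dp k G"
  by (simp add: dp_mult)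

lemma cst_mult: "cst a * cst b = cst (a * b)" by (simp add: mult_single)
lemma cst_add: "cst a + cst b = cst (a + b)" by (simp add: single_add)
lemma cst_diff: "cst a - cst b = cst (a - b)" by (simp add: single_diff)
lemma cst_one: "cst 1 = 1" by simp



definition mev :: "nat \<Rightarrow> (nat \<Rightarrow>\<^sub>0 nat) \<Rightarrow> (nat \<Rightarrow> real) \<Rightarrow> real" where
  "mev n m y = (\<Prod>k\<in>Poly_Mapping.keys m. psum n k y ^ Poly_Mapping.lookup m k)"

lemma mev_superset: "finite S \<Longrightarrow> Poly_Mapping.keys m \<subseteq> S \<Longrightarrow>
   mev n m y = (\<Prod>k\<in>S. psum n k y ^ Poly_Mapping.lookup m k)"
  unfolding mev_def by (rule prod.mono_neutral_left) (auto simp: in_keys_iff)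

lemma mev_add: "mev n (a + b) y = mev n a y * mev n b y"
proof -
  let ?S = "Poly_Mapping.keys a \<union> Poly_Mapping.keys b"
  have "mev n (a + b) y = (\<Prod>k\<in>?S. psum n k y ^ Poly_Mapping.lookup (a + b) k)"
    by (rule mev_superset) (auto dest: keys_add[THEN subsetD])
  also have "\<dots> = (\<Prod>k\<in>?S. psum n k y ^ Poly_Mapping.lookup a k) * (\<Prod>k\<in>?S. psum n k y ^ Poly_Mapping.lookup b k)"
    by (simp add: lookup_add power_add prod.distrib)
  also have "\<dots> = mev n a y * mev n b y"
    by (subst (1 2) mev_superset[of ?S]) auto
  finally show ?thesis .
qed

lemma mev_zero[simp]: "mev n 0 y = 1" by (simp add: mev_def)

lemma ev_superset: "finite S \<Longrightarrow> Poly_Mapping.keys F \<subseteq> S \<Longrightarrow>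
   ev n F y = (\<Sum>m\<in>S. Poly_Mapping.lookup F m * mev n m y)"
  unfolding ev_def mev_def[symmetric] by (rule sum.mono_neutral_left) (auto simp: in_keys_iff)

lemma ev_add: "ev n (F + G) y = ev n F y + ev n G y"
proof -
  let ?S = "Poly_Mapping.keys F \<union> Poly_Mapping.keys G"
  have "ev n (F + G) y = (\<Sum>m\<in>?S. Poly_Mapping.lookup (F + G) m * mev n m y)"
    by (rule ev_superset) (auto dest: keys_add[THEN subsetD])
  also have "\<dots> = (\<Sum>m\<in>?S. Poly_Mapping.lookup F m * mev n m y) + (\<Sum>m\<in>?S. Poly_Mapping.lookup G m * mev n m y)"
    by (simp add: lookup_add algebra_simps sum.distrib)
  also have "\<dots> = ev n F y + ev n G y"
    by (subst (1 2) ev_superset[of ?S]) auto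
  finally show ?thesis .
qed

lemma ev_zero[simp]: "ev n 0 y = 0" by (simp add: ev_def)

lemma ev_uminus: "ev n (- F) y = - ev n F y"
  using ev_add[of n F "-F" y] by simp

lemma ev_minus: "ev n (F - G) y = ev n F y - ev n G y"
  using ev_add[of n "F - G" G y] by simp

lemma ev_sum: "ev n (\<Sum>i\<in>S. f i) y = (\<Sum>i\<in>S. ev n (f i) y)"
  by (induction S rule: infinite_finite_induct) (auto simp: ev_add)

lemma ev_single: "ev n (Poly_Mapping.single m c) y = c * mev n m y"
  by (cases "c = 0") (simp_all add: ev_def mev_def)

lemma ev_mult: "ev n (F * G) y = ev n F y * ev n G y"
proof -
  define sF where "sF a = Poly_Mapping.single a (Poly_Mapping.lookup F a)" for a
  define sG where "sG b = Poly_Mapping.single b (Poly_Mapping.lookup G b)" for b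
  have F: "F = (\<Sum>a\<in>Poly_Mapping.keys F. sF a)" unfolding sF_def by (rule poly_decomp)
  have G: "G = (\<Sum>b\<in>Poly_Mapping.keys G. sG b)" unfolding sG_def by (rule poly_decomp)
  have "ev n (F * G) y = ev n ((\<Sum>a\<in>Poly_Mapping.keys F. sF a) * (\<Sum>b\<in>Poly_Mapping.keys G. sG b)) y"
    using F G by simp
  also have "\<dots> = (\<Sum>a\<in>Poly_Mapping.keys F. \<Sum>b\<in>Poly_Mapping.keys G. ev n (sF a * sG b) y)"
    by (simp add: sum_product ev_sum)
  also have "\<dots> = (\<Sum>a\<in>Poly_Mapping.keys F. \<Sum>b\<in>Poly_Mapping.keys G. ev n (sF a) y * ev n (sG b) y)"
    unfolding sF_def sG_def by (simp add: mult_single ev_single mev_add mult_ac)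
  also have "\<dots> = (\<Sum>a\<in>Poly_Mapping.keys F. ev n (sF a) y) * (\<Sum>b\<in>Poly_Mapping.keys G. ev n (sG b) y)"
    by (simp add: sum_product)
  also have "\<dots> = ev n F y * ev n G y"
    using F G ev_sum[of n sF "Poly_Mapping.keys F" y] ev_sum[of n sG "Poly_Mapping.keys G" y] by metis
  finally show ?thesis .
qed

lemma ev_cst[simp]: "ev n (cst c) y = c"
  by (simp add: ev_single)

lemma ev_one[simp]: "ev n 1 y = 1"
  using ev_cst[of n 1 y] by simp

lemma ev_of_nat[simp]: "ev n (of_nat k) y = real k"
  using ev_cst[of n "real k" y] by simp

lemma ev_pvar[simp]: "ev n (pvar k) y = psum n k y"
  by (simp add: pvar_def ev_single mev_def)

lemmas ev_simps = ev_add ev_minus ev_uminus ev_mult ev_sum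



lemma psum_upd: "i < n \<Longrightarrow> psum n k (y(i:=t)) = t ^ k + (\<Sum>j\<in>{..<n}-{i}. y j ^ k)"
  unfolding psum_def by (subst sum.remove[of _ i]) (auto intro!: sum.cong)

lemma psum_deriv: "i < n \<Longrightarrow>
  ((\<lambda>t. psum n k (y(i:=t))) has_real_derivative (real k * y i ^ (k-1))) (at (y i))"
  unfolding psum_upd
  by (auto intro!: derivative_eq_intros)

lemma mev_remove: "k \<in> Poly_Mapping.keys m \<Longrightarrow>
   mev n (m - ek k) y = psum n k y ^ (Poly_Mapping.lookup m k - 1) *
      (\<Prod>j\<in>Poly_Mapping.keys m - {k}. psum n j y ^ Poly_Mapping.lookup m j)"
proof -
  assume k: "k \<in> Poly_Mapping.keys m"
  have "mev n (m - ek k) y = (\<Prod>j\<in>Poly_Mapping.keys m. psum n j y ^ Poly_Mapping.lookup (m - ek k) j)"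
    by (rule mev_superset) (auto simp: in_keys_iff lookup_minus)
  also have "\<dots> = psum n k y ^ Poly_Mapping.lookup (m - ek k) k *
      (\<Prod>j\<in>Poly_Mapping.keys m - {k}. psum n j y ^ Poly_Mapping.lookup (m - ek k) j)"
    using k by (simp add: prod.remove)
  also have "\<dots> = psum n k y ^ (Poly_Mapping.lookup m k - 1) *
      (\<Prod>j\<in>Poly_Mapping.keys m - {k}. psum n j y ^ Poly_Mapping.lookup m j)"
    by (auto simp: lookup_minus lookup_single intro!: prod.cong)
  finally show ?thesis .
qed

lemma mev_deriv: "i < n \<Longrightarrow>
  ((\<lambda>t. mev n m (y(i:=t))) has_real_derivative
     (\<Sum>k\<in>Poly_Mapping.keys m. real k * y i ^ (k-1) * (real (Poly_Mapping.lookup m k) * mev n (m - ek k) y))) (at (y i))"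
proof -
  assume i: "i < n"
  have yy: "y(i := y i) = y" by simp
  have d: "((\<lambda>t. psum n k (y(i:=t)) ^ Poly_Mapping.lookup m k) has_real_derivative
       (real (Poly_Mapping.lookup m k) * psum n k y ^ (Poly_Mapping.lookup m k - 1) * (real k * y i ^ (k-1)))) (at (y i))" for k
    using DERIV_pow[THEN DERIV_chain2, OF psum_deriv[OF i, of k y]] by (simp add: yy)
  have "((\<lambda>t. mev n m (y(i:=t))) has_real_derivative
     (\<Sum>k\<in>Poly_Mapping.keys m. (real (Poly_Mapping.lookup m k) * psum n k y ^ (Poly_Mapping.lookup m k - 1) * (real k * y i ^ (k-1)))
        * (\<Prod>j\<in>Poly_Mapping.keys m - {k}. psum n j (y(i:= y i)) ^ Poly_Mapping.lookup m j))) (at (y i))"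
    unfolding mev_def by (rule has_field_derivative_prod) (rule d)
  also have "(\<Sum>k\<in>Poly_Mapping.keys m. (real (Poly_Mapping.lookup m k) * psum n k y ^ (Poly_Mapping.lookup m k - 1) * (real k * y i ^ (k-1)))
        * (\<Prod>j\<in>Poly_Mapping.keys m - {k}. psum n j (y(i:= y i)) ^ Poly_Mapping.lookup m j))
     = (\<Sum>k\<in>Poly_Mapping.keys m. real k * y i ^ (k-1) * (real (Poly_Mapping.lookup m k) * mev n (m - ek k) y))"
    by (rule sum.cong) (simp_all add: mev_remove[simplified] yy)
  finally show ?thesis .
qed

lemma pidx_keys: "m \<in> Poly_Mapping.keys G \<Longrightarrow> Poly_Mapping.keys m \<subseteq> pidx G"
  unfolding pidx_def by auto

lemma ev_dp: "ev n (dp k G) y = (\<Sum>m\<in>Poly_Mapping.keys G. Poly_Mapping.lookup G m * real (Poly_Mapping.lookup m k) * mev n (m - ek k) y)"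
  unfolding dp_def by (simp add: ev_sum ev_single)

lemma sum_keys_to_range:
  assumes "Poly_Mapping.keys m \<subseteq> {..M}" "\<And>k. h k = (real k * real (Poly_Mapping.lookup (m::nat\<Rightarrow>\<^sub>0nat) k)) * g k"
  shows "(\<Sum>k\<in>Poly_Mapping.keys m. h k) = (\<Sum>k\<in>{1..M}. h k)"
proof -
  have "(\<Sum>k\<in>Poly_Mapping.keys m. h k) = (\<Sum>k\<in>Poly_Mapping.keys m \<union> {1..M}. h k)"
    by (rule sum.mono_neutral_left) (auto simp: assms(2) in_keys_iff)
  also have "\<dots> = (\<Sum>k\<in>{1..M}. h k)"
  proof (rule sum.mono_neutral_right)
    show "\<forall>i\<in>Poly_Mapping.keys m \<union> {1..M} - {1..M}. h i = 0"
      using assms by auto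
  qed auto
  finally show ?thesis .
qed

lemma ev_deriv:
  assumes i: "i < n" and b: "pidx G \<subseteq> {..M}"
  shows "((\<lambda>t. ev n G (y(i:=t))) has_real_derivative
     (\<Sum>k\<in>{1..M}. real k * y i ^ (k-1) * ev n (dp k G) y)) (at (y i))"
proof -
  have "((\<lambda>t. \<Sum>m\<in>Poly_Mapping.keys G. Poly_Mapping.lookup G m * mev n m (y(i:=t))) has_real_derivative
     (\<Sum>m\<in>Poly_Mapping.keys G. Poly_Mapping.lookup G m *
        (\<Sum>k\<in>Poly_Mapping.keys m. real k * y i ^ (k-1) * (real (Poly_Mapping.lookup m k) * mev n (m - ek k) y)))) (at (y i))"
    by (intro DERIV_sum DERIV_cmult mev_deriv i)
  also have "(\<Sum>m\<in>Poly_Mapping.keys G. Poly_Mapping.lookup G m *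
        (\<Sum>k\<in>Poly_Mapping.keys m. real k * y i ^ (k-1) * (real (Poly_Mapping.lookup m k) * mev n (m - ek k) y)))
     = (\<Sum>m\<in>Poly_Mapping.keys G. Poly_Mapping.lookup G m *
        (\<Sum>k\<in>{1..M}. real k * y i ^ (k-1) * (real (Poly_Mapping.lookup m k) * mev n (m - ek k) y)))"
  proof (rule sum.cong[OF refl])
    fix m assume m: "m \<in> Poly_Mapping.keys G"
    have "Poly_Mapping.keys m \<subseteq> {..M}" using pidx_keys[OF m] b by auto
    then show "Poly_Mapping.lookup G m *
        (\<Sum>k\<in>Poly_Mapping.keys m. real k * y i ^ (k-1) * (real (Poly_Mapping.lookup m k) * mev n (m - ek k) y))
      = Poly_Mapping.lookup G m *
        (\<Sum>k\<in>{1..M}. real k * y i ^ (k-1) * (real (Poly_Mapping.lookup m k) * mev n (m - ek k) y))"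
      by (subst sum_keys_to_range[where g = "\<lambda>k. y i ^ (k-1) * mev n (m - ek k) y"]) (auto simp: mult_ac)
  qed
  also have "\<dots> = (\<Sum>k\<in>{1..M}. \<Sum>m\<in>Poly_Mapping.keys G. real k * y i ^ (k-1) *
        (Poly_Mapping.lookup G m * real (Poly_Mapping.lookup m k) * mev n (m - ek k) y))"
    by (subst sum.swap) (simp add: sum_distrib_left mult_ac)
  also have "\<dots> = (\<Sum>k\<in>{1..M}. real k * y i ^ (k-1) * ev n (dp k G) y)"
    unfolding ev_dp by (simp add: sum_distrib_left)
  finally show ?thesis unfolding ev_def mev_def .
qed



lemma pidx_zero[simp]: "pidx 0 = {}" by (simp add: pidx_def)

lemma pidx_add: "pidx (F + G) \<subseteq> pidx F \<union> pidx G"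
  unfolding pidx_def using keys_add[of F G] by auto


lemma pidx_sum: "pidx (\<Sum>i\<in>S. f i) \<subseteq> (\<Union>i\<in>S. pidx (f i))"
proof (induction S rule: infinite_finite_induct)
  case (insert x F)
  then show ?case using pidx_add[of "f x" "sum f F"] by auto
qed auto

lemma keys_add_mon: "Poly_Mapping.keys ((a::nat\<Rightarrow>\<^sub>0nat) + b) \<subseteq> Poly_Mapping.keys a \<union> Poly_Mapping.keys b"
  by (rule keys_add)

lemma pidx_mult: "pidx (F * G) \<subseteq> pidx F \<union> pidx G"
proof
  fix x assume "x \<in> pidx (F * G)"
  then obtain m where m: "m \<in> Poly_Mapping.keys (F * G)" "x \<in> Poly_Mapping.keys m" unfolding pidx_def by auto
  then obtain a b where "m = a + b" "a \<in> Poly_Mapping.keys F" "b \<in> Poly_Mapping.keys G" using keys_mult[of F G] by auto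
  then show "x \<in> pidx F \<union> pidx G" using m(2) keys_add_mon[of a b] unfolding pidx_def by auto
qed

lemma pidx_single: "pidx (Poly_Mapping.single m c) \<subseteq> Poly_Mapping.keys m"
  unfolding pidx_def by auto

lemma pidx_cst[simp]: "pidx (cst c) = {}"
  using pidx_single[of 0 c] by auto

lemma pidx_of_nat[simp]: "pidx (of_nat k) = {}"
  using pidx_cst[of "real k"] by simp

lemma pidx_one[simp]: "pidx 1 = {}"
  using pidx_cst[of 1] by simp

lemma pidx_pvar: "pidx (pvar k) \<subseteq> {k}"
  unfolding pvar_def using pidx_single[of "ek k" 1] by auto

lemma keys_minus_mon: "Poly_Mapping.keys ((a::nat\<Rightarrow>\<^sub>0nat) - b) \<subseteq> Poly_Mapping.keys a"
  by (auto simp: in_keys_iff lookup_minus)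

lemma pidx_dp: "pidx (dp k G) \<subseteq> pidx G"
proof -
  have "pidx (dp k G) \<subseteq> (\<Union>m\<in>Poly_Mapping.keys G. pidx (Poly_Mapping.single (m - ek k) (Poly_Mapping.lookup G m * real (Poly_Mapping.lookup m k))))"
    unfolding dp_def by (rule pidx_sum)
  also have "\<dots> \<subseteq> (\<Union>m\<in>Poly_Mapping.keys G. Poly_Mapping.keys m)"
  proof (rule UN_mono[OF order_refl])
    fix m show "pidx (Poly_Mapping.single (m - ek k) (Poly_Mapping.lookup G m * real (Poly_Mapping.lookup m k))) \<subseteq> Poly_Mapping.keys m"
      using pidx_single keys_minus_mon by (rule order_trans)
  qed
  finally show ?thesis by (simp add: pidx_def)
qed

lemma dp_vanish: "k \<notin> pidx G \<Longrightarrow> dp k G = 0"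
  unfolding dp_def
proof (rule sum.neutral, rule ballI)
  fix m assume k: "k \<notin> pidx G" and m: "m \<in> Poly_Mapping.keys G"
  have "k \<notin> Poly_Mapping.keys m" using k m unfolding pidx_def by blast
  then have "Poly_Mapping.lookup m k = 0" by (simp add: in_keys_iff)
  then show "Poly_Mapping.single (m - ek k) (Poly_Mapping.lookup G m * real (Poly_Mapping.lookup m k)) = 0" by simp
qed

lemma pd_ev:
  assumes i: "i < n" and b: "pidx G \<subseteq> {..M}"
  shows "pd i (ev n G) y = (\<Sum>k\<in>{1..M}. real k * y i ^ (k-1) * ev n (dp k G) y)"
  unfolding pd_def by (rule DERIV_imp_deriv[OF ev_deriv[OF i b]])

lemma pd_ev_fun:
  assumes i: "i < n" and b: "pidx G \<subseteq> {..M}"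
  shows "pd i (ev n G) (y(i:=t)) = (\<Sum>k\<in>{1..M}. real k * t ^ (k-1) * ev n (dp k G) (y(i:=t)))"
  using pd_ev[OF i b, of "y(i:=t)"] by simp

lemma pd2_ev:
  assumes i: "i < n" and b: "pidx G \<subseteq> {..M}"
  shows "pd i (pd i (ev n G)) y = (\<Sum>k\<in>{1..M}.
      real k * (real (k-1) * y i ^ (k-1-1)) * ev n (dp k G) y
      + (\<Sum>l\<in>{1..M}. real l * y i ^ (l-1) * ev n (dp l (dp k G)) y) * (real k * y i ^ (k-1)))"
proof -
  have bk: "pidx (dp k G) \<subseteq> {..M}" for k using pidx_dp b by blast
  have "((\<lambda>t. \<Sum>k\<in>{1..M}. real k * t ^ (k-1) * ev n (dp k G) (y(i:=t))) has_real_derivative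
     (\<Sum>k\<in>{1..M}.
      real k * (real (k-1) * y i ^ (k-1-1)) * ev n (dp k G) (y(i := y i))
      + (\<Sum>l\<in>{1..M}. real l * y i ^ (l-1) * ev n (dp l (dp k G)) y) * (real k * y i ^ (k-1)))) (at (y i))"
  proof (rule DERIV_sum)
    fix k
    have d1: "((\<lambda>t. real k * t ^ (k - 1)) has_real_derivative real k * (real (k-1) * y i ^ (k-1-1))) (at (y i))"
      by (auto intro!: derivative_eq_intros)
    show "((\<lambda>t. real k * t ^ (k-1) * ev n (dp k G) (y(i:=t))) has_real_derivative
      real k * (real (k-1) * y i ^ (k-1-1)) * ev n (dp k G) (y(i := y i))
      + (\<Sum>l\<in>{1..M}. real l * y i ^ (l-1) * ev n (dp l (dp k G)) y) * (real k * y i ^ (k-1))) (at (y i))"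
      using DERIV_mult[OF d1 ev_deriv[OF i bk, of k y]] by simp
  qed
  then have "((\<lambda>t. pd i (ev n G) (y(i:=t))) has_real_derivative
     (\<Sum>k\<in>{1..M}.
      real k * (real (k-1) * y i ^ (k-1-1)) * ev n (dp k G) y
      + (\<Sum>l\<in>{1..M}. real l * y i ^ (l-1) * ev n (dp l (dp k G)) y) * (real k * y i ^ (k-1)))) (at (y i))"
    by (simp add: pd_ev_fun[OF i b])
  then show ?thesis unfolding pd_def[of i "pd i (ev n G)"] by (rule DERIV_imp_deriv)
qed



definition Eop :: "nat \<Rightarrow> symfun \<Rightarrow> symfun" where
  "Eop M G = (\<Sum>k\<in>{1..M}. of_nat k * pvar (k+1) * dp k G)"

definition bb :: "nat \<Rightarrow> symfun" where
  "bb k = (\<Sum>a\<in>{1..<k}. pvar a * pvar (k - a))"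

definition Aop :: "real \<Rightarrow> nat \<Rightarrow> symfun \<Rightarrow> symfun" where
  "Aop a M G = (\<Sum>k\<in>{1..M}. cst ((a - 1) / 2 * real k * real (k - 1)) * pvar k * dp k G)"

definition Bop :: "nat \<Rightarrow> symfun \<Rightarrow> symfun" where
  "Bop M G = (\<Sum>k\<in>{1..M}. cst (real k / 2) * bb k * dp k G)"

definition Cop :: "real \<Rightarrow> nat \<Rightarrow> symfun \<Rightarrow> symfun" where
  "Cop a M G = (\<Sum>k\<in>{1..M}. \<Sum>l\<in>{1..M}. cst (a / 2 * real k * real l) * pvar (k + l) * dp k (dp l G))"

definition Dop :: "real \<Rightarrow> nat \<Rightarrow> symfun \<Rightarrow> symfun" where
  "Dop a M G = Aop a M G + Bop M G + Cop a M G"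

lemma E2_ev:
  assumes b: "pidx G \<subseteq> {..M}"
  shows "E2 n (ev n G) y = ev n (Eop M G) y"
proof -
  have "E2 n (ev n G) y = (\<Sum>i<n. y i ^ 2 * (\<Sum>k\<in>{1..M}. real k * y i ^ (k-1) * ev n (dp k G) y))"
    unfolding E2_def by (rule sum.cong) (simp_all add: pd_ev[OF _ b])
  also have "\<dots> = (\<Sum>i<n. \<Sum>k\<in>{1..M}. real k * y i ^ (k+1) * ev n (dp k G) y)"
    unfolding sum_distrib_left
    by (intro sum.cong refl) (auto simp: power_add[symmetric] mult_ac simp del: power_Suc)
  also have "\<dots> = ev n (Eop M G) y"
    unfolding Eop_def by (subst sum.swap) (simp add: ev_simps psum_def sum_distrib_left sum_distrib_right mult_ac)
  finally show ?thesis .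
qed


lemma telescope: "(x::real) ^ Suc k * y - y ^ Suc k * x = (x - y) * (\<Sum>a\<in>{1..k}. x ^ a * y ^ (Suc k - a))"
proof (induction k)
  case 0
  then show ?case by simp
next
  case (Suc k)
  have "(\<Sum>a\<in>{1..Suc k}. x ^ a * y ^ (Suc (Suc k) - a)) = (\<Sum>a\<in>{1..k}. x ^ a * y ^ (Suc (Suc k) - a)) + x ^ Suc k * y"
    by simp
  also have "(\<Sum>a\<in>{1..k}. x ^ a * y ^ (Suc (Suc k) - a)) = y * (\<Sum>a\<in>{1..k}. x ^ a * y ^ (Suc k - a))"
    unfolding sum_distrib_left by (intro sum.cong refl) (simp add: Suc_diff_le)
  finally have e: "(\<Sum>a\<in>{1..Suc k}. x ^ a * y ^ (Suc (Suc k) - a)) = y * (\<Sum>a\<in>{1..k}. x ^ a * y ^ (Suc k - a)) + x ^ Suc k * y" .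
  have "(x - y) * (y * (\<Sum>a\<in>{1..k}. x ^ a * y ^ (Suc k - a)) + x ^ Suc k * y)
      = y * ((x - y) * (\<Sum>a\<in>{1..k}. x ^ a * y ^ (Suc k - a))) + (x - y) * x ^ Suc k * y"
    by (simp add: algebra_simps)
  also have "\<dots> = y * (x ^ Suc k * y - y ^ Suc k * x) + (x - y) * x ^ Suc k * y"
    by (simp only: Suc.IH)
  also have "\<dots> = x ^ Suc (Suc k) * y - y ^ Suc (Suc k) * x"
    by (simp add: algebra_simps)
  finally show ?case unfolding e by simp
qed

lemma offdiag_eq: fixes f :: "'a \<Rightarrow> 'a \<Rightarrow> 'b::ab_group_add" shows "finite A \<Longrightarrow> (\<Sum>i\<in>A. \<Sum>j\<in>A-{i}. f i j) = (\<Sum>i\<in>A. \<Sum>j\<in>A. f i j) - (\<Sum>i\<in>A. f i i)"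
proof -
  assume A: "finite A"
  have "(\<Sum>i\<in>A. \<Sum>j\<in>A-{i}. f i j) = (\<Sum>i\<in>A. (\<Sum>j\<in>A. f i j) - f i i)"
    using A by (intro sum.cong refl) (simp add: sum_diff1)
  then show ?thesis by (simp add: sum_subtractf)
qed

lemma offdiag_swap: fixes f :: "'a \<Rightarrow> 'a \<Rightarrow> 'b::ab_group_add" shows "finite A \<Longrightarrow> (\<Sum>i\<in>A. \<Sum>j\<in>A-{i}. f i j) = (\<Sum>i\<in>A. \<Sum>j\<in>A-{i}. f j i)"
  using offdiag_eq[of A f] offdiag_eq[of A "\<lambda>i j. f j i"] sum.swap[of f A A] by simp

lemma Rk:
  assumes inj: "inj_on y {..<n}"
  shows "(\<Sum>i<n. \<Sum>j\<in>{..<n}-{i}. y i ^ Suc k * y j / (y i - y j))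
     = (\<Sum>a\<in>{1..k}. psum n a y * psum n (Suc k - a) y) / 2 - real k / 2 * psum n (Suc k) y"
proof -
  let ?g = "\<lambda>i j. y i ^ Suc k * y j / (y i - y j)"
  let ?h = "\<lambda>i j. \<Sum>a\<in>{1..k}. y i ^ a * y j ^ (Suc k - a)"
  have "2 * (\<Sum>i<n. \<Sum>j\<in>{..<n}-{i}. ?g i j) = (\<Sum>i<n. \<Sum>j\<in>{..<n}-{i}. ?g i j) + (\<Sum>i<n. \<Sum>j\<in>{..<n}-{i}. ?g j i)"
    using offdiag_swap[of "{..<n}" ?g] by simp
  also have "\<dots> = (\<Sum>i<n. \<Sum>j\<in>{..<n}-{i}. ?g i j + ?g j i)"
    by (simp add: sum.distrib)
  also have "\<dots> = (\<Sum>i<n. \<Sum>j\<in>{..<n}-{i}. ?h i j)"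
  proof (intro sum.cong refl)
    fix i j assume i: "i \<in> {..<n}" and j: "j \<in> {..<n} - {i}"
    have ne: "y i - y j \<noteq> 0" using inj i j by (auto simp: inj_on_def)
    have gji: "?g j i = - (y j ^ Suc k * y i / (y i - y j))" by (metis minus_diff_eq minus_divide_right)
    have "?g i j + ?g j i = (y i ^ Suc k * y j - y j ^ Suc k * y i) / (y i - y j)"
      unfolding gji by (simp add: diff_divide_distrib)
    also have "\<dots> = ?h i j" unfolding telescope using ne by simp
    finally show "?g i j + ?g j i = ?h i j" .
  qed
  also have "\<dots> = (\<Sum>i<n. \<Sum>j<n. ?h i j) - (\<Sum>i<n. ?h i i)"
    by (rule offdiag_eq) simp
  also have "(\<Sum>i<n. \<Sum>j<n. ?h i j) = (\<Sum>a\<in>{1..k}. psum n a y * psum n (Suc k - a) y)"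
  proof -
    have "(\<Sum>i<n. \<Sum>j<n. ?h i j) = (\<Sum>i<n. \<Sum>a\<in>{1..k}. \<Sum>j<n. y i ^ a * y j ^ (Suc k - a))"
      by (rule sum.cong[OF refl], rule sum.swap)
    also have "\<dots> = (\<Sum>a\<in>{1..k}. \<Sum>i<n. \<Sum>j<n. y i ^ a * y j ^ (Suc k - a))"
      by (rule sum.swap)
    finally show ?thesis unfolding psum_def sum_product .
  qed
  also have "(\<Sum>i<n. ?h i i) = real k * psum n (Suc k) y"
  proof -
    have "(\<Sum>i<n. ?h i i) = (\<Sum>i<n. \<Sum>a\<in>{1..k}. y i ^ Suc k)"
      by (intro sum.cong refl) (simp add: power_add[symmetric])
    then show ?thesis by (simp add: psum_def sum_distrib_left)
  qed
  finally show ?thesis by simp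
qed


lemma Rk':
  assumes inj: "inj_on y {..<n}" and k: "1 \<le> k"
  shows "(\<Sum>i<n. \<Sum>j\<in>{..<n}-{i}. y i ^ k * y j / (y i - y j))
     = (\<Sum>a\<in>{1..<k}. psum n a y * psum n (k - a) y) / 2 - real (k - 1) / 2 * psum n k y"
proof -
  obtain j where kj: "k = Suc j" using k by (cases k) auto
  have "{1..<Suc j} = {1..j}" by auto
  then show ?thesis using Rk[OF inj, of j] unfolding kj by simp
qed

lemma pw1: "(z::real) ^ 2 * (real k * (real (k-1) * z ^ (k-1-1)) * g) = real k * real (k-1) * z ^ k * g"
proof (cases "k \<ge> 2")
  case True
  then obtain j where "k = Suc (Suc j)" by (metis add_2_eq_Suc le_Suc_ex)
  then have "z ^ 2 * z ^ (k-1-1) = z ^ k" by (simp add: power2_eq_square)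
  then show ?thesis by (metis (no_types, lifting) mult.assoc mult.left_commute)
next
  case False
  then have "k = 0 \<or> k = 1" by auto
  then show ?thesis by auto
qed

lemma pw2: "1 \<le> k \<Longrightarrow> 1 \<le> l \<Longrightarrow> (z::real) ^ 2 * (real l * z ^ (l-1) * g * (real k * z ^ (k-1))) = real k * real l * z ^ (k + l) * g"
proof -
  assume "1 \<le> k" "1 \<le> l"
  then obtain a where a: "k = Suc a" by (cases k) auto
  obtain b where b: "l = Suc b" using \<open>1 \<le> l\<close> by (cases l) auto
  from a b have "z ^ 2 * z ^ (l-1) * z ^ (k-1) = z ^ (k+l)" by (simp add: power2_eq_square power_add)
  then show ?thesis by (metis (no_types, lifting) mult.assoc mult.commute)
qed

lemma ev_bb: "ev n (bb k) y = (\<Sum>a\<in>{1..<k}. psum n a y * psum n (k - a) y)"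
  by (simp add: bb_def ev_simps)

lemma T1:
  assumes b: "pidx G \<subseteq> {..M}"
  shows "(\<Sum>i<n. y i ^ 2 * pd i (pd i (ev n G)) y)
     = (\<Sum>k\<in>{1..M}. real k * real (k-1) * psum n k y * ev n (dp k G) y)
       + (\<Sum>k\<in>{1..M}. \<Sum>l\<in>{1..M}. real k * real l * psum n (k + l) y * ev n (dp k (dp l G)) y)"
proof -
  have "(\<Sum>i<n. y i ^ 2 * pd i (pd i (ev n G)) y)
     = (\<Sum>i<n. \<Sum>k\<in>{1..M}. real k * real (k-1) * y i ^ k * ev n (dp k G) y
          + (\<Sum>l\<in>{1..M}. real k * real l * y i ^ (k + l) * ev n (dp k (dp l G)) y))"
  proof (intro sum.cong refl)
    fix i assume i: "i \<in> {..<n}"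
    show "y i ^ 2 * pd i (pd i (ev n G)) y = (\<Sum>k\<in>{1..M}. real k * real (k-1) * y i ^ k * ev n (dp k G) y
          + (\<Sum>l\<in>{1..M}. real k * real l * y i ^ (k + l) * ev n (dp k (dp l G)) y))"
      unfolding pd2_ev[OF _ b, of i n y, OF i[simplified]] sum_distrib_left
    proof (rule sum.cong[OF refl])
      fix k assume k: "k \<in> {1..M}"
      have "y i ^ 2 * (real k * (real (k-1) * y i ^ (k-1-1)) * ev n (dp k G) y
      + (\<Sum>l\<in>{1..M}. real l * y i ^ (l-1) * ev n (dp l (dp k G)) y) * (real k * y i ^ (k-1)))
        = y i ^ 2 * (real k * (real (k-1) * y i ^ (k-1-1)) * ev n (dp k G) y)
          + (\<Sum>l\<in>{1..M}. y i ^ 2 * (real l * y i ^ (l-1) * ev n (dp l (dp k G)) y * (real k * y i ^ (k-1))))"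
        by (simp only: distrib_left sum_distrib_left sum_distrib_right)
      also have "\<dots> = real k * real (k-1) * y i ^ k * ev n (dp k G) y
          + (\<Sum>l\<in>{1..M}. real k * real l * y i ^ (k + l) * ev n (dp k (dp l G)) y)"
      proof -
        have "(\<Sum>l\<in>{1..M}. y i ^ 2 * (real l * y i ^ (l-1) * ev n (dp l (dp k G)) y * (real k * y i ^ (k-1))))
           = (\<Sum>l\<in>{1..M}. real k * real l * y i ^ (k + l) * ev n (dp k (dp l G)) y)"
        proof (rule sum.cong[OF refl])
          fix l assume l: "l \<in> {1..M}"
          show "y i ^ 2 * (real l * y i ^ (l-1) * ev n (dp l (dp k G)) y * (real k * y i ^ (k-1)))
             = real k * real l * y i ^ (k + l) * ev n (dp k (dp l G)) y"
            by (subst pw2) (use k l in \<open>auto simp: dp_comm\<close>)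
        qed
        then show ?thesis unfolding pw1 by simp
      qed
      finally show "y i ^ 2 * (real k * (real (k-1) * y i ^ (k-1-1)) * ev n (dp k G) y
      + (\<Sum>l\<in>{1..M}. real l * y i ^ (l-1) * ev n (dp l (dp k G)) y) * (real k * y i ^ (k-1)))
        = real k * real (k-1) * y i ^ k * ev n (dp k G) y
          + (\<Sum>l\<in>{1..M}. real k * real l * y i ^ (k + l) * ev n (dp k (dp l G)) y)" .
    qed
  qed
  also have "\<dots> = (\<Sum>k\<in>{1..M}. \<Sum>i<n. real k * real (k-1) * y i ^ k * ev n (dp k G) y
          + (\<Sum>l\<in>{1..M}. real k * real l * y i ^ (k + l) * ev n (dp k (dp l G)) y))"
    by (rule sum.swap)
  also have "\<dots> = (\<Sum>k\<in>{1..M}. (\<Sum>i<n. real k * real (k-1) * y i ^ k * ev n (dp k G) y)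
          + (\<Sum>l\<in>{1..M}. \<Sum>i<n. real k * real l * y i ^ (k + l) * ev n (dp k (dp l G)) y))"
    by (simp add: sum.distrib sum.swap[of _ "{..<n}"])
  also have "\<dots> = (\<Sum>k\<in>{1..M}. real k * real (k-1) * psum n k y * ev n (dp k G) y
          + (\<Sum>l\<in>{1..M}. real k * real l * psum n (k + l) y * ev n (dp k (dp l G)) y))"
    by (simp add: psum_def sum_distrib_left sum_distrib_right mult_ac)
  finally show ?thesis by (simp add: sum.distrib)
qed


lemma pw3: "1 \<le> k \<Longrightarrow> (z::real) * w / d * (real k * z ^ (k-1) * g) = real k * g * (z ^ k * w / d)"
  by (cases k) (auto simp: field_simps)

lemma T2:
  assumes b: "pidx G \<subseteq> {..M}" and inj: "inj_on y {..<n}"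
  shows "(\<Sum>i<n. \<Sum>j\<in>{..<n}-{i}. y i * y j / (y i - y j) * pd i (ev n G) y)
     = (\<Sum>k\<in>{1..M}. real k * ev n (dp k G) y *
         (ev n (bb k) y / 2 - real (k - 1) / 2 * psum n k y))"
proof -
  have "(\<Sum>i<n. \<Sum>j\<in>{..<n}-{i}. y i * y j / (y i - y j) * pd i (ev n G) y)
      = (\<Sum>i<n. \<Sum>j\<in>{..<n}-{i}. \<Sum>k\<in>{1..M}. real k * ev n (dp k G) y * (y i ^ k * y j / (y i - y j)))"
  proof (intro sum.cong refl)
    fix i j assume i: "i \<in> {..<n}"
    show "y i * y j / (y i - y j) * pd i (ev n G) y
        = (\<Sum>k\<in>{1..M}. real k * ev n (dp k G) y * (y i ^ k * y j / (y i - y j)))"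
      unfolding pd_ev[OF _ b, of i n y, OF i[simplified]] sum_distrib_left
      by (intro sum.cong refl) (subst pw3, auto)
  qed
  also have "\<dots> = (\<Sum>i<n. \<Sum>k\<in>{1..M}. \<Sum>j\<in>{..<n}-{i}. real k * ev n (dp k G) y * (y i ^ k * y j / (y i - y j)))"
    by (rule sum.cong[OF refl], rule sum.swap)
  also have "\<dots> = (\<Sum>k\<in>{1..M}. \<Sum>i<n. \<Sum>j\<in>{..<n}-{i}. real k * ev n (dp k G) y * (y i ^ k * y j / (y i - y j)))"
    by (rule sum.swap)
  also have "\<dots> = (\<Sum>k\<in>{1..M}. real k * ev n (dp k G) y * (\<Sum>i<n. \<Sum>j\<in>{..<n}-{i}. y i ^ k * y j / (y i - y j)))"
    by (simp add: sum_distrib_left)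
  also have "\<dots> = (\<Sum>k\<in>{1..M}. real k * ev n (dp k G) y *
         (ev n (bb k) y / 2 - real (k - 1) / 2 * psum n k y))"
    by (intro sum.cong refl) (simp add: Rk'[OF inj] ev_bb)
  finally show ?thesis .
qed

lemma LB_ev:
  assumes b: "pidx G \<subseteq> {..M}" and inj: "inj_on y {..<n}"
  shows "LB \<alpha> n (ev n G) y = ev n (Dop \<alpha> M G) y"
proof -
  have "LB \<alpha> n (ev n G) y = \<alpha> / 2 * ((\<Sum>k\<in>{1..M}. real k * real (k-1) * psum n k y * ev n (dp k G) y)
       + (\<Sum>k\<in>{1..M}. \<Sum>l\<in>{1..M}. real k * real l * psum n (k + l) y * ev n (dp k (dp l G)) y))
     + (\<Sum>k\<in>{1..M}. real k * ev n (dp k G) y *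
         (ev n (bb k) y / 2 - real (k - 1) / 2 * psum n k y))"
    unfolding LB_def T1[OF b] T2[OF b inj] ..
  also have "\<dots> = (\<Sum>k\<in>{1..M}. (\<alpha> - 1) / 2 * real k * real (k - 1) * psum n k y * ev n (dp k G) y)
     + (\<Sum>k\<in>{1..M}. real k / 2 * ev n (bb k) y * ev n (dp k G) y)
     + (\<Sum>k\<in>{1..M}. \<Sum>l\<in>{1..M}. \<alpha> / 2 * real k * real l * psum n (k + l) y * ev n (dp k (dp l G)) y)"
  proof -
    have comb: "\<And>(a::real) k r P g S bv. a / 2 * (k * r * P * g) + S + k * g * (bv / 2 - r / 2 * P)
        = (a - 1) / 2 * k * r * P * g + k / 2 * bv * g + S"
      by (simp add: field_simps)
    show ?thesis
      unfolding distrib_left sum_distrib_left sum.distrib[symmetric]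
      by (rule sum.cong[OF refl], subst comb) (simp add: mult_ac)
  qed
  also have "\<dots> = ev n (Dop \<alpha> M G) y"
    unfolding Dop_def Aop_def Bop_def Cop_def by (simp only: ev_add ev_mult ev_sum ev_cst ev_pvar)
  finally show ?thesis .
qed



lemma Eop_add: "Eop K (X + Y) = Eop K X + Eop K Y"
  by (simp add: Eop_def dp_add sum.distrib algebra_simps)

lemma Eop_minus: "Eop K (X - Y) = Eop K X - Eop K Y"
  by (simp add: Eop_def dp_minus sum_subtractf algebra_simps)

lemma Eop_zero[simp]: "Eop K 0 = 0" by (simp add: Eop_def)

lemma Eop_sum: "Eop K (\<Sum>i\<in>S. f i) = (\<Sum>i\<in>S. Eop K (f i))"
  by (induction S rule: infinite_finite_induct) (auto simp: Eop_add)

lemma dp_of_nat[simp]: "dp k (of_nat m) = 0"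
  using dp_const[of k "real m"] by (simp del: dp_const)

lemma Eop_mult: "Eop K (X * Y) = Eop K X * Y + X * Eop K Y"
  by (simp add: Eop_def dp_mult sum.distrib sum_distrib_left sum_distrib_right algebra_simps)

lemma Eop_cst[simp]: "Eop K (cst c) = 0"
  by (simp add: Eop_def)

lemma Eop_cmult: "Eop K (cst c * X) = cst c * Eop K X"
  by (simp add: Eop_mult)

lemma Eop_pvar: "Eop K (pvar a) = (if a \<in> {1..K} then of_nat a * pvar (a + 1) else 0)"
proof -
  have "Eop K (pvar a) = (\<Sum>k\<in>{1..K}. if k = a then of_nat k * pvar (k + 1) else 0)"
    unfolding Eop_def by (intro sum.cong refl) (simp add: dp_pvar)
  also have "\<dots> = (if a \<in> {1..K} then of_nat a * pvar (a + 1) else 0)"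
    by (simp add: sum.delta')
  finally show ?thesis .
qed

lemma dp_Eop:
  assumes "j \<le> K + 1"
  shows "dp j (Eop K G) = Eop K (dp j G) + of_nat (j - 1) * dp (j - 1) G"
proof -
  have "dp j (Eop K G) = (\<Sum>k\<in>{1..K}. of_nat k * (dp j (pvar (k+1)) * dp k G + pvar (k+1) * dp j (dp k G)))"
    unfolding Eop_def dp_sum by (intro sum.cong refl) (simp add: dp_mult algebra_simps)
  also have "\<dots> = (\<Sum>k\<in>{1..K}. if k = j - 1 \<and> 1 \<le> j then of_nat k * dp k G else 0) + Eop K (dp j G)"
    unfolding Eop_def distrib_left sum.distrib
    by (intro arg_cong2[where f="(+)"] sum.cong refl) (auto simp: dp_pvar dp_comm mult_ac)
  also have "(\<Sum>k\<in>{1..K}. if k = j - 1 \<and> 1 \<le> j then of_nat k * dp k G else 0) = of_nat (j - 1) * dp (j - 1) G"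
  proof (cases "2 \<le> j")
    case True
    then have "(\<Sum>k\<in>{1..K}. if k = j - 1 \<and> 1 \<le> j then of_nat k * dp k G else 0) = (\<Sum>k\<in>{1..K}. if k = j - 1 then of_nat k * dp k G else 0)"
      by (intro sum.cong refl) auto
    also have "\<dots> = of_nat (j - 1) * dp (j - 1) G" using True assms by (subst sum.delta) auto
    finally show ?thesis .
  next
    case False
    then have "j - 1 = 0" by auto
    moreover have "(\<Sum>k\<in>{1..K}. if k = j - 1 \<and> 1 \<le> j then of_nat k * dp k G else (0::symfun)) = 0"
      using False by (intro sum.neutral) auto
    ultimately show ?thesis by simp
  qed
  finally show ?thesis by (simp add: add.commute)
qed


lemma comm_A: "Aop a K (Eop K F) - Eop K (Aop a K F) =
   (\<Sum>k\<in>{1..K}. cst ((a - 1) / 2 * real k * real (k - 1)) *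
      (of_nat (k - 1) * pvar k * dp (k - 1) F - of_nat k * pvar (k + 1) * dp k F))"
  unfolding Aop_def Eop_sum sum_subtractf[symmetric]
  by (intro sum.cong refl) (simp add: dp_Eop Eop_mult Eop_pvar algebra_simps)

lemma comm_B: "Bop K (Eop K F) - Eop K (Bop K F) =
   (\<Sum>k\<in>{1..K}. cst (real k / 2) *
      (of_nat (k - 1) * bb k * dp (k - 1) F - Eop K (bb k) * dp k F))"
  unfolding Bop_def Eop_sum sum_subtractf[symmetric]
  by (intro sum.cong refl) (simp add: dp_Eop Eop_mult algebra_simps)

lemma Eop_bb: "k \<le> K \<Longrightarrow> Eop K (bb k) =
   (\<Sum>a\<in>{1..<k}. of_nat a * pvar (a + 1) * pvar (k - a) + of_nat (k - a) * pvar a * pvar (k - a + 1))"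
  unfolding bb_def Eop_sum
  by (intro sum.cong refl) (auto simp: Eop_mult Eop_pvar algebra_simps)

lemma dp_ofnat_mult: "dp k (of_nat m * X) = of_nat m * dp k X"
  by (simp add: dp_mult)

lemma comm_C: "Cop a K (Eop K F) - Eop K (Cop a K F) =
   (\<Sum>k\<in>{1..K}. \<Sum>l\<in>{1..K}. cst (a / 2 * real k * real l) *
      (pvar (k + l) * (of_nat (k - 1) * dp (k - 1) (dp l F) + of_nat (l - 1) * dp k (dp (l - 1) F))
       - Eop K (pvar (k + l)) * dp k (dp l F)))"
  unfolding Cop_def Eop_sum sum_subtractf[symmetric]
  by (intro sum.cong refl) (simp add: dp_Eop dp_add dp_minus dp_ofnat_mult Eop_mult algebra_simps)



lemma fz: "pidx F \<subseteq> {..N} \<Longrightarrow> N < k \<Longrightarrow> dp k F = 0"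
  by (rule dp_vanish) auto

lemma ffz1: "pidx F \<subseteq> {..N} \<Longrightarrow> N < k \<Longrightarrow> dp k (dp l F) = 0"
  by (rule dp_vanish) (use pidx_dp[of l F] in auto)

lemma ffz2: "pidx F \<subseteq> {..N} \<Longrightarrow> N < l \<Longrightarrow> dp k (dp l F) = 0"
  by (simp add: fz)

lemma RA:
  assumes bF: "pidx F \<subseteq> {..N}" and K: "N + 1 \<le> K"
  shows "ev n (\<Sum>k\<in>{1..K}. cst ((a - 1) / 2 * real k * real (k - 1)) *
      (of_nat (k - 1) * pvar k * dp (k - 1) F - of_nat k * pvar (k + 1) * dp k F)) y
   = ev n (cst (a - 1) * (\<Sum>i\<in>{2..N + 1}. cst (real ((i - 1)^2)) * pvar i * dp (i - 1) F)) y"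
proof -
  let ?f = "\<lambda>k. ev n (dp k F) y" and ?P = "\<lambda>k. psum n k y"
  let ?c = "\<lambda>k. (a - 1) / 2 * real k * real (k - 1)"
  have "ev n (\<Sum>k\<in>{1..K}. cst (?c k) *
      (of_nat (k - 1) * pvar k * dp (k - 1) F - of_nat k * pvar (k + 1) * dp k F)) y
      = (\<Sum>k\<in>{1..K}. ?c k * real (k - 1) * ?P k * ?f (k - 1)) - (\<Sum>k\<in>{1..K}. ?c k * real k * ?P (k + 1) * ?f k)"
    by (simp add: ev_simps sum_subtractf[symmetric] algebra_simps del: of_nat_diff)
  also have "(\<Sum>k\<in>{1..K}. ?c k * real (k - 1) * ?P k * ?f (k - 1)) = (\<Sum>k\<in>{2..N+1}. ?c k * real (k - 1) * ?P k * ?f (k - 1))"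
  proof (rule sum.mono_neutral_right)
    show "\<forall>k\<in>{1..K} - {2..N + 1}. ?c k * real (k - 1) * ?P k * ?f (k - 1) = 0"
    proof
      fix k assume k: "k \<in> {1..K} - {2..N + 1}"
      then have "k = 1 \<or> N < k - 1" by auto
      then show "?c k * real (k - 1) * ?P k * ?f (k - 1) = 0" using fz[OF bF] by auto
    qed
  qed (use K in auto)
  also have "(\<Sum>k\<in>{1..K}. ?c k * real k * ?P (k + 1) * ?f k) = (\<Sum>k\<in>{1..N}. ?c k * real k * ?P (k + 1) * ?f k)"
    by (rule sum.mono_neutral_right) (use K fz[OF bF] in auto)
  also have "\<dots> = (\<Sum>k\<in>{1..N}. (\<lambda>k. ?c (k - 1) * real (k - 1) * ?P k * ?f (k - 1)) (Suc k))"
    by (intro sum.cong refl) simp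
  also have "\<dots> = (\<Sum>k\<in>{Suc 1..Suc N}. ?c (k - 1) * real (k - 1) * ?P k * ?f (k - 1))"
    by (rule sum.shift_bounds_cl_Suc_ivl[symmetric])
  also have "\<dots> = (\<Sum>k\<in>{2..N+1}. ?c (k - 1) * real (k - 1) * ?P k * ?f (k - 1))"
    by (simp add: numeral_2_eq_2)
  also have "(\<Sum>k\<in>{2..N+1}. ?c k * real (k - 1) * ?P k * ?f (k - 1)) - \<dots>
      = (\<Sum>k\<in>{2..N+1}. (a - 1) * (real ((k - 1)^2) * ?P k * ?f (k - 1)))"
    unfolding sum_subtractf[symmetric]
  proof (rule sum.cong[OF refl])
    fix k assume "k \<in> {2..N+1}"
    then obtain m where m: "k = Suc (Suc m)" by (metis atLeastAtMost_iff add_2_eq_Suc le_Suc_ex)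
    show "?c k * real (k - 1) * ?P k * ?f (k - 1) - ?c (k - 1) * real (k - 1) * ?P k * ?f (k - 1)
      = (a - 1) * (real ((k - 1)^2) * ?P k * ?f (k - 1))"
      unfolding m by (simp add: field_simps power2_eq_square)
  qed
  also have "\<dots> = ev n (cst (a - 1) * (\<Sum>i\<in>{2..N + 1}. cst (real ((i - 1)^2)) * pvar i * dp (i - 1) F)) y"
    by (simp only: ev_mult ev_sum ev_cst ev_pvar sum_distrib_left)
  finally show ?thesis .
qed


lemma tri: "(\<Sum>i\<in>{1..N::nat}. \<Sum>k\<in>{i..N}. h i k) = (\<Sum>k\<in>{1..N}. \<Sum>i\<in>{1..k}. (h i k :: real))"
proof -
  have "(\<Sum>i\<in>{1..N::nat}. \<Sum>k\<in>{i..N}. h i k) = (\<Sum>i\<in>{1..N}. \<Sum>k\<in>{k. k \<in> {1..N} \<and> i \<le> k}. h i k)"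
    by (intro sum.cong refl) auto
  also have "\<dots> = (\<Sum>k\<in>{1..N}. \<Sum>i\<in>{i. i \<in> {1..N} \<and> i \<le> k}. h i k)"
    by (rule sum.swap_restrict) auto
  also have "\<dots> = (\<Sum>k\<in>{1..N}. \<Sum>i\<in>{1..k}. h i k)"
    by (intro sum.cong refl) auto
  finally show ?thesis .
qed

definition ww :: "nat \<Rightarrow> nat \<Rightarrow> (nat \<Rightarrow> real) \<Rightarrow> real" where
  "ww n k y = (\<Sum>a\<in>{1..k}. psum n a y * psum n (k + 1 - a) y)"

lemma ev_bb_ww: "ev n (bb k) y = ww n (k - 1) y"
proof (cases k)
  case 0 then show ?thesis by (simp add: bb_def ww_def)
next
  case (Suc j)
  have "{1..<Suc j} = {1..j}" by auto
  then show ?thesis unfolding ev_bb ww_def Suc by (intro sum.cong) auto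
qed

lemma ev_Eop_bb: assumes "k \<le> K" shows "ev n (Eop K (bb k)) y = real (k - 1) * ww n k y"
proof (cases k)
  case 0 then show ?thesis by (simp add: bb_def)
next
  case (Suc j)
  let ?P = "\<lambda>k. psum n k y"
  have "ev n (Eop K (bb k)) y = (\<Sum>a\<in>{1..<k}. real a * ?P (a + 1) * ?P (k - a)) + (\<Sum>a\<in>{1..<k}. real (k - a) * ?P a * ?P (k - a + 1))"
    unfolding Eop_bb[OF assms] by (simp add: ev_simps sum.distrib)
  also have "(\<Sum>a\<in>{1..<k}. real a * ?P (a + 1) * ?P (k - a)) = (\<Sum>a\<in>{1..j}. real a * ?P (a + 1) * ?P (k - a))"
    using Suc by (intro sum.cong) auto
  also have "\<dots> = (\<Sum>a\<in>{1..j}. (\<lambda>b. real (b - 1) * ?P b * ?P (k + 1 - b)) (Suc a))"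
    using Suc by (intro sum.cong refl) auto
  also have "\<dots> = (\<Sum>b\<in>{Suc 1..Suc j}. real (b - 1) * ?P b * ?P (k + 1 - b))"
    by (rule sum.shift_bounds_cl_Suc_ivl[symmetric])
  also have "\<dots> = (\<Sum>b\<in>{1..k}. real (b - 1) * ?P b * ?P (k + 1 - b))"
    using Suc by (intro sum.mono_neutral_left) auto
  also have "(\<Sum>a\<in>{1..<k}. real (k - a) * ?P a * ?P (k - a + 1)) = (\<Sum>a\<in>{1..k}. real (k - a) * ?P a * ?P (k + 1 - a))"
    by (rule sum.mono_neutral_cong_left) (auto simp: Suc_diff_le)
  also have "(\<Sum>b\<in>{1..k}. real (b - 1) * ?P b * ?P (k + 1 - b)) + \<dots> = (\<Sum>a\<in>{1..k}. real (k - 1) * (?P a * ?P (k + 1 - a)))"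
    unfolding sum.distrib[symmetric]
  proof (rule sum.cong[OF refl])
    fix a assume "a \<in> {1..k}"
    then have "real (a - 1) + real (k - a) = real (k - 1)" by auto
    then show "real (a - 1) * ?P a * ?P (k + 1 - a) + real (k - a) * ?P a * ?P (k + 1 - a) = real (k - 1) * (?P a * ?P (k + 1 - a))"
      by (metis distrib_right mult.assoc)
  qed
  finally show ?thesis by (simp add: ww_def sum_distrib_left)
qed


lemma RB:
  assumes bF: "pidx F \<subseteq> {..N}" and K: "N + 1 \<le> K"
  shows "ev n (\<Sum>k\<in>{1..K}. cst (real k / 2) *
      (of_nat (k - 1) * bb k * dp (k - 1) F - Eop K (bb k) * dp k F)) y
   = ev n (\<Sum>i\<in>{1..N}. \<Sum>j\<in>{1..N}. cst (real (i + j - 1)) * pvar i * pvar j * dp (i + j - 1) F) y"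
proof -
  let ?f = "\<lambda>k. ev n (dp k F) y" and ?P = "\<lambda>k. psum n k y" and ?w = "\<lambda>k. ww n k y"
  let ?u = "\<lambda>j. real (j + 1) / 2 * real j * ?w j * ?f j"
  let ?v = "\<lambda>k. real k / 2 * real (k - 1) * ?w k * ?f k"
  have "ev n (\<Sum>k\<in>{1..K}. cst (real k / 2) *
      (of_nat (k - 1) * bb k * dp (k - 1) F - Eop K (bb k) * dp k F)) y
    = (\<Sum>k\<in>{1..K}. ?u (k - 1) - ?v k)"
    unfolding ev_sum
  proof (rule sum.cong[OF refl])
    fix k assume k: "k \<in> {1..K}"
    then have k1: "real (k - 1 + 1) = real k" by auto
    have kK: "k \<le> K" using k by auto
    show "ev n (cst (real k / 2) * (of_nat (k - 1) * bb k * dp (k - 1) F - Eop K (bb k) * dp k F)) y = ?u (k - 1) - ?v k"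
      using k unfolding k1 by (simp only: ev_mult ev_minus ev_cst ev_of_nat ev_bb_ww ev_Eop_bb[OF kK]) (simp add: field_simps)
  qed
  also have "\<dots> = (\<Sum>k\<in>{Suc 0..Suc (K - 1)}. ?u (k - 1)) - (\<Sum>k\<in>{1..K}. ?v k)"
    using K by (simp add: sum_subtractf)
  also have "(\<Sum>k\<in>{Suc 0..Suc (K - 1)}. ?u (k - 1)) = (\<Sum>j\<in>{0..K - 1}. ?u j)"
    by (subst sum.shift_bounds_cl_Suc_ivl) simp
  also have "\<dots> = (\<Sum>j\<in>{1..N}. ?u j)"
    by (rule sum.mono_neutral_right) (use K fz[OF bF] in \<open>auto simp: not_le\<close>)
  also have "(\<Sum>k\<in>{1..K}. ?v k) = (\<Sum>k\<in>{1..N}. ?v k)"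
    by (rule sum.mono_neutral_right) (use K fz[OF bF] in auto)
  also have "(\<Sum>j\<in>{1..N}. ?u j) - \<dots> = (\<Sum>k\<in>{1..N}. real k * ?w k * ?f k)"
    unfolding sum_subtractf[symmetric]
  proof (rule sum.cong[OF refl])
    fix k assume "k \<in> {1..N}"
    then obtain m where m: "k = Suc m" by (cases k) auto
    show "?u k - ?v k = real k * ?w k * ?f k" unfolding m by (simp add: field_simps)
  qed
  also have "\<dots> = (\<Sum>k\<in>{1..N}. \<Sum>i\<in>{1..k}. real k * ?P i * ?P (k + 1 - i) * ?f k)"
    by (simp add: ww_def sum_distrib_left sum_distrib_right mult_ac)
  also have "\<dots> = (\<Sum>i\<in>{1..N}. \<Sum>k\<in>{i..N}. real k * ?P i * ?P (k + 1 - i) * ?f k)"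
    by (rule tri[symmetric])
  also have "\<dots> = (\<Sum>i\<in>{1..N}. \<Sum>j\<in>{1..N}. real (i + j - 1) * ?P i * ?P j * ?f (i + j - 1))"
  proof (rule sum.cong[OF refl])
    fix i assume i: "i \<in> {1..N}"
    let ?h = "\<lambda>k. real k * ?P i * ?P (k + 1 - i) * ?f k"
    have "(\<Sum>j\<in>{1..N}. real (i + j - 1) * ?P i * ?P j * ?f (i + j - 1)) = (\<Sum>j\<in>{1..N}. ?h (j + (i - 1)))"
      using i by (intro sum.cong refl) (auto simp: ac_simps)
    also have "\<dots> = (\<Sum>k\<in>{1 + (i - 1)..N + (i - 1)}. ?h k)"
      by (rule sum.shift_bounds_cl_nat_ivl[symmetric])
    also have "\<dots> = (\<Sum>k\<in>{i..N}. ?h k)"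
      using i by (intro sum.mono_neutral_right) (auto simp: fz[OF bF])
    finally show "(\<Sum>k\<in>{i..N}. ?h k) = (\<Sum>j\<in>{1..N}. real (i + j - 1) * ?P i * ?P j * ?f (i + j - 1))" by simp
  qed
  also have "\<dots> = ev n (\<Sum>i\<in>{1..N}. \<Sum>j\<in>{1..N}. cst (real (i + j - 1)) * pvar i * pvar j * dp (i + j - 1) F) y"
    by (simp only: ev_mult ev_sum ev_cst ev_pvar)
  finally show ?thesis .
qed


lemma sum2_restrict:
  assumes "finite A" "finite B" "A' \<subseteq> A" "B' \<subseteq> B"
    and "\<And>k l. k \<in> A \<Longrightarrow> l \<in> B \<Longrightarrow> k \<notin> A' \<or> l \<notin> B' \<Longrightarrow> g k l = (0::real)"
  shows "(\<Sum>k\<in>A. \<Sum>l\<in>B. g k l) = (\<Sum>k\<in>A'. \<Sum>l\<in>B'. g k l)"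
proof -
  have "(\<Sum>k\<in>A. \<Sum>l\<in>B. g k l) = (\<Sum>k\<in>A'. \<Sum>l\<in>B. g k l)"
    by (rule sum.mono_neutral_right) (use assms in \<open>auto intro!: sum.neutral\<close>)
  also have "\<dots> = (\<Sum>k\<in>A'. \<Sum>l\<in>B'. g k l)"
    by (intro sum.cong refl sum.mono_neutral_right) (use assms in auto)
  finally show ?thesis .
qed

lemma shift1: fixes K :: nat shows "1 \<le> K \<Longrightarrow> (\<Sum>k\<in>{1..K}. G (k - 1)) = (\<Sum>j\<in>{0..K - 1}. (G j :: real))"
proof -
  assume K: "1 \<le> K"
  have "(\<Sum>k\<in>{1..K}. G (k - 1)) = (\<Sum>k\<in>{Suc 0..Suc (K - 1)}. G (k - 1))" using K by simp
  also have "\<dots> = (\<Sum>j\<in>{0..K - 1}. G j)" by (subst sum.shift_bounds_cl_Suc_ivl) simp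
  finally show ?thesis .
qed

lemma RC:
  assumes bF: "pidx F \<subseteq> {..N}" and K: "2 * N + 1 \<le> K"
  shows "ev n (\<Sum>k\<in>{1..K}. \<Sum>l\<in>{1..K}. cst (a / 2 * real k * real l) *
      (pvar (k + l) * (of_nat (k - 1) * dp (k - 1) (dp l F) + of_nat (l - 1) * dp k (dp (l - 1) F))
       - Eop K (pvar (k + l)) * dp k (dp l F))) y
   = ev n (cst a * (\<Sum>i\<in>{1..N}. \<Sum>j\<in>{1..N}. cst (real (i * j)) * pvar (i + j + 1) * dp i (dp j F))) y"
proof -
  let ?P = "\<lambda>k. psum n k y" and ?ff = "\<lambda>k l. ev n (dp k (dp l F)) y"
  let ?X1 = "\<lambda>k l. a / 2 * real k * real l * real (k - 1) * ?P (k + l) * ?ff (k - 1) l"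
  let ?X2 = "\<lambda>k l. a / 2 * real k * real l * real (l - 1) * ?P (k + l) * ?ff k (l - 1)"
  let ?X3 = "\<lambda>k l. a / 2 * real k * real l * ev n (Eop K (pvar (k + l))) y * ?ff k l"
  have z1: "?ff k l = 0" if "N < k" for k l using ffz1[OF bF that] by simp
  have z2: "?ff k l = 0" if "N < l" for k l using ffz2[OF bF that] by simp
  have K1: "1 \<le> K" using K by simp
  have "ev n (\<Sum>k\<in>{1..K}. \<Sum>l\<in>{1..K}. cst (a / 2 * real k * real l) *
      (pvar (k + l) * (of_nat (k - 1) * dp (k - 1) (dp l F) + of_nat (l - 1) * dp k (dp (l - 1) F))
       - Eop K (pvar (k + l)) * dp k (dp l F))) y
     = (\<Sum>k\<in>{1..K}. \<Sum>l\<in>{1..K}. ?X1 k l) + (\<Sum>k\<in>{1..K}. \<Sum>l\<in>{1..K}. ?X2 k l) - (\<Sum>k\<in>{1..K}. \<Sum>l\<in>{1..K}. ?X3 k l)"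
    by (simp only: ev_sum ev_mult ev_add ev_minus ev_cst ev_of_nat ev_pvar sum.distrib[symmetric] sum_subtractf[symmetric])
       (intro sum.cong refl, simp add: field_simps)
  also have "(\<Sum>k\<in>{1..K}. \<Sum>l\<in>{1..K}. ?X1 k l)
      = (\<Sum>k\<in>{1..N}. \<Sum>l\<in>{1..N}. a / 2 * real (k + 1) * real l * real k * ?P (k + l + 1) * ?ff k l)"
  proof -
    have "(\<Sum>k\<in>{1..K}. \<Sum>l\<in>{1..K}. ?X1 k l)
      = (\<Sum>k\<in>{1..K}. (\<lambda>j. \<Sum>l\<in>{1..K}. a / 2 * real (j + 1) * real l * real j * ?P (j + 1 + l) * ?ff j l) (k - 1))"
      by (intro sum.cong refl) auto
    also have "\<dots> = (\<Sum>j\<in>{0..K - 1}. \<Sum>l\<in>{1..K}. a / 2 * real (j + 1) * real l * real j * ?P (j + 1 + l) * ?ff j l)"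
      by (rule shift1[OF K1])
    also have "\<dots> = (\<Sum>k\<in>{1..N}. \<Sum>l\<in>{1..N}. a / 2 * real (k + 1) * real l * real k * ?P (k + 1 + l) * ?ff k l)"
      by (rule sum2_restrict) (use K z1 z2 in \<open>auto simp: not_le\<close>)
    finally show ?thesis by (simp add: ac_simps)
  qed
  also have "(\<Sum>k\<in>{1..K}. \<Sum>l\<in>{1..K}. ?X2 k l)
      = (\<Sum>k\<in>{1..N}. \<Sum>l\<in>{1..N}. a / 2 * real k * real (l + 1) * real l * ?P (k + l + 1) * ?ff k l)"
  proof -
    have "(\<Sum>k\<in>{1..K}. \<Sum>l\<in>{1..K}. ?X2 k l) = (\<Sum>l\<in>{1..K}. \<Sum>k\<in>{1..K}. ?X2 k l)"
      by (rule sum.swap)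
    also have "\<dots> = (\<Sum>l\<in>{1..K}. (\<lambda>j. \<Sum>k\<in>{1..K}. a / 2 * real k * real (j + 1) * real j * ?P (k + j + 1) * ?ff k j) (l - 1))"
      by (intro sum.cong refl) (auto simp: ac_simps)
    also have "\<dots> = (\<Sum>j\<in>{0..K - 1}. \<Sum>k\<in>{1..K}. a / 2 * real k * real (j + 1) * real j * ?P (k + j + 1) * ?ff k j)"
      by (rule shift1[OF K1])
    also have "\<dots> = (\<Sum>l\<in>{1..N}. \<Sum>k\<in>{1..N}. a / 2 * real k * real (l + 1) * real l * ?P (k + l + 1) * ?ff k l)"
      by (rule sum2_restrict) (use K z1 z2 in \<open>auto simp: not_le\<close>)
    also have "\<dots> = (\<Sum>k\<in>{1..N}. \<Sum>l\<in>{1..N}. a / 2 * real k * real (l + 1) * real l * ?P (k + l + 1) * ?ff k l)"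
      by (rule sum.swap)
    finally show ?thesis .
  qed
  also have "(\<Sum>k\<in>{1..K}. \<Sum>l\<in>{1..K}. ?X3 k l)
      = (\<Sum>k\<in>{1..N}. \<Sum>l\<in>{1..N}. a / 2 * real k * real l * real (k + l) * ?P (k + l + 1) * ?ff k l)"
  proof -
    have "(\<Sum>k\<in>{1..K}. \<Sum>l\<in>{1..K}. ?X3 k l) = (\<Sum>k\<in>{1..N}. \<Sum>l\<in>{1..N}. ?X3 k l)"
      by (rule sum2_restrict) (use K z1 z2 in \<open>auto simp: not_le\<close>)
    also have "\<dots> = (\<Sum>k\<in>{1..N}. \<Sum>l\<in>{1..N}. a / 2 * real k * real l * real (k + l) * ?P (k + l + 1) * ?ff k l)"
      by (intro sum.cong refl) (use K in \<open>auto simp: Eop_pvar ev_simps\<close>)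
    finally show ?thesis .
  qed
  also have "(\<Sum>k\<in>{1..N}. \<Sum>l\<in>{1..N}. a / 2 * real (k + 1) * real l * real k * ?P (k + l + 1) * ?ff k l)
      + (\<Sum>k\<in>{1..N}. \<Sum>l\<in>{1..N}. a / 2 * real k * real (l + 1) * real l * ?P (k + l + 1) * ?ff k l)
      - (\<Sum>k\<in>{1..N}. \<Sum>l\<in>{1..N}. a / 2 * real k * real l * real (k + l) * ?P (k + l + 1) * ?ff k l)
      = (\<Sum>k\<in>{1..N}. \<Sum>l\<in>{1..N}. a * (real (k * l) * ?P (k + l + 1) * ?ff k l))"
    unfolding sum.distrib[symmetric] sum_subtractf[symmetric]
    by (intro sum.cong refl) (simp add: field_simps)
  also have "\<dots> = ev n (cst a * (\<Sum>i\<in>{1..N}. \<Sum>j\<in>{1..N}. cst (real (i * j)) * pvar (i + j + 1) * dp i (dp j F))) y"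
    by (simp only: ev_mult ev_sum ev_cst ev_pvar sum_distrib_left)
  finally show ?thesis .
qed



lemma pidx_mult_le: "pidx X \<subseteq> S \<Longrightarrow> pidx Y \<subseteq> S \<Longrightarrow> pidx (X * Y) \<subseteq> S"
  using pidx_mult[of X Y] by blast

lemma pidx_add_le: "pidx X \<subseteq> S \<Longrightarrow> pidx Y \<subseteq> S \<Longrightarrow> pidx (X + Y) \<subseteq> S"
  using pidx_add[of X Y] by blast

lemma pidx_sum_le: "(\<And>i. i \<in> A \<Longrightarrow> pidx (f i) \<subseteq> S) \<Longrightarrow> pidx (\<Sum>i\<in>A. f i) \<subseteq> S"
  using pidx_sum[of f A] by blast

lemma pidx_pvar_le: "k \<in> S \<Longrightarrow> pidx (pvar k) \<subseteq> S"
  using pidx_pvar[of k] by blast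

lemma pidx_dp_le: "pidx G \<subseteq> S \<Longrightarrow> pidx (dp k G) \<subseteq> S"
  using pidx_dp[of k G] by blast

lemma pidx_bound: "pidx F \<subseteq> {..pbound F}"
proof -
  have fin: "finite (pidx F)" unfolding pidx_def by auto
  show ?thesis unfolding pbound_def using fin by auto
qed

lemma bound_E:
  assumes bF: "pidx F \<subseteq> {..N}" and K: "N + 1 \<le> K"
  shows "pidx (Eop K F) \<subseteq> {..K}"
  unfolding Eop_def
proof (rule pidx_sum_le)
  fix k assume k: "k \<in> {1..K}"
  show "pidx (of_nat k * pvar (k + 1) * dp k F) \<subseteq> {..K}"
  proof (cases "k \<le> N")
    case True
    then show ?thesis using K bF
      by (intro pidx_mult_le pidx_pvar_le pidx_dp_le) auto
  next
    case False
    then show ?thesis using fz[OF bF] by simp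
  qed
qed

lemma pidx_bb: "pidx (bb k) \<subseteq> {..k}"
  unfolding bb_def by (intro pidx_sum_le pidx_mult_le pidx_pvar_le) auto

lemma bound_D:
  assumes bF: "pidx F \<subseteq> {..N}" and K: "2 * N + 1 \<le> K"
  shows "pidx (Dop a K F) \<subseteq> {..K}"
  unfolding Dop_def
proof (intro pidx_add_le)
  show "pidx (Aop a K F) \<subseteq> {..K}"
    unfolding Aop_def
  proof (rule pidx_sum_le)
    fix k assume k: "k \<in> {1..K}"
    show "pidx (cst ((a - 1) / 2 * real k * real (k - 1)) * pvar k * dp k F) \<subseteq> {..K}"
      using k bF K by (intro pidx_mult_le pidx_pvar_le pidx_dp_le) auto
  qed
  show "pidx (Bop K F) \<subseteq> {..K}"
    unfolding Bop_def
  proof (rule pidx_sum_le)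
    fix k assume k: "k \<in> {1..K}"
    show "pidx (cst (real k / 2) * bb k * dp k F) \<subseteq> {..K}"
      using k bF K pidx_bb[of k] by (intro pidx_mult_le pidx_dp_le) auto
  qed
  show "pidx (Cop a K F) \<subseteq> {..K}"
    unfolding Cop_def
  proof (intro pidx_sum_le)
    fix k l assume k: "k \<in> {1..K}" and l: "l \<in> {1..K}"
    show "pidx (cst (a / 2 * real k * real l) * pvar (k + l) * dp k (dp l F)) \<subseteq> {..K}"
    proof (cases "k \<le> N \<and> l \<le> N")
      case True
      then show ?thesis using K bF by (intro pidx_mult_le pidx_pvar_le pidx_dp_le) auto
    next
      case False
      then show ?thesis using ffz1[OF bF] ffz2[OF bF] by (auto simp: not_le)
    qed
  qed
qed

lemma inj_upd:
  assumes inj: "inj_on x {..<n}" and i: "i < n" and t: "t \<notin> x ` ({..<n} - {i})"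
  shows "inj_on (x(i := t)) {..<n}"
  using inj i t unfolding inj_on_def by (auto split: if_splits)

lemma pd_local:
  assumes inj: "inj_on x {..<n}" and i: "i < n"
    and eq: "\<And>y. inj_on y {..<n} \<Longrightarrow> f y = g y"
  shows "pd i f x = pd i g x"
  unfolding pd_def
proof (rule deriv_cong_ev)
  let ?S = "- (x ` ({..<n} - {i}))"
  have "open ?S" by (intro open_Compl finite_imp_closed) auto
  moreover have "x i \<in> ?S" using inj i by (auto simp: inj_on_def)
  moreover have "\<forall>t\<in>?S. f (x(i := t)) = g (x(i := t))"
    using inj_upd[OF inj i] eq by auto
  ultimately show "\<forall>\<^sub>F t in nhds (x i). f (x(i := t)) = g (x(i := t))"
    unfolding eventually_nhds by blast
qed simp

theorem mainTheorem8:
  fixes \<alpha> :: real and n :: nat and F :: symfun and x :: "nat \<Rightarrow> real"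
  assumes "is_symfun F"
    and "inj_on x {..<n}"
  shows "LB \<alpha> n (E2 n (ev n F)) x - E2 n (LB \<alpha> n (ev n F)) x = ev n (rhs_op \<alpha> F) x"
proof -
  define N where "N = pbound F"
  define K where "K = 2 * N + 1"
  have bF: "pidx F \<subseteq> {..N}" unfolding N_def by (rule pidx_bound)
  have bFK: "pidx F \<subseteq> {..K}" using bF unfolding K_def by auto
  have K1: "N + 1 \<le> K" and K2: "2 * N + 1 \<le> K" unfolding K_def by auto
  have bE: "pidx (Eop K F) \<subseteq> {..K}" by (rule bound_E[OF bF K1])
  have bD: "pidx (Dop \<alpha> K F) \<subseteq> {..K}" by (rule bound_D[OF bF K2])
  have s1: "E2 n (ev n F) = ev n (Eop K F)"
    by (rule ext) (rule E2_ev[OF bFK])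
  have s2: "LB \<alpha> n (E2 n (ev n F)) x = ev n (Dop \<alpha> K (Eop K F)) x"
    unfolding s1 by (rule LB_ev[OF bE assms(2)])
  have s3: "E2 n (LB \<alpha> n (ev n F)) x = E2 n (ev n (Dop \<alpha> K F)) x"
    unfolding E2_def
    by (intro sum.cong refl arg_cong2[where f="(*)"] pd_local[OF assms(2)]) (auto intro: LB_ev[OF bFK])
  have s4: "E2 n (ev n (Dop \<alpha> K F)) x = ev n (Eop K (Dop \<alpha> K F)) x"
    by (rule E2_ev[OF bD])
  have "LB \<alpha> n (E2 n (ev n F)) x - E2 n (LB \<alpha> n (ev n F)) x
      = ev n (Dop \<alpha> K (Eop K F) - Eop K (Dop \<alpha> K F)) x"
    unfolding s2 s3 s4 ev_minus ..
  also have "Dop \<alpha> K (Eop K F) - Eop K (Dop \<alpha> K F)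
     = (Aop \<alpha> K (Eop K F) - Eop K (Aop \<alpha> K F)) + (Bop K (Eop K F) - Eop K (Bop K F))
       + (Cop \<alpha> K (Eop K F) - Eop K (Cop \<alpha> K F))"
    unfolding Dop_def Eop_add by (simp add: algebra_simps)
  also have "ev n \<dots> x = ev n (rhs_op \<alpha> F) x"
    unfolding comm_A comm_B comm_C ev_add RA[OF bF K1] RB[OF bF K1] RC[OF bF K2]
    unfolding rhs_op_def N_def ev_add ..
  finally show ?thesis .
qed


end
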